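(* Consider the continuous-time system $\dot x=Ax+Bu+Lf(t,z)$, $z=Hx$, with $A,B$ unknown, $L\in\mathbb{R}^{n\times p}$ and $H\in\mathbb{R}^{p\times n}$ known, and data $U_0,X_0,X_1,F_0$ (with $X_1$ containing sampled state derivatives) satisfying $X_1=AX_0+BU_0+LF_0$. Suppose there exists $Y\in\mathbb{R}^{T\times n}$ such that $X_0Y$ is symmetric positive definite, $Y^\top(X_1-LF_0)^\top+(X_1-LF_0)Y\prec 0$, and $L+X_0YH^\top=0$. Then with $K=U_0Y(X_0Y)^{-1}$ the origin of the closed-loop system $\dot x=(A+BK)x+Lf(t,Hx)$ is globally uniformly asymptotically stable for every passive nonlinearity $f$, i.e. every $f:\mathbb{R}\times\mathbb{R}^p\to\mathbb{R}^p$ (piecewise continuous in $t$, locally Lipschitz in $z$) with $z^\top f(t,z)\ge 0$ for all $t,z$.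
   Context: Data: $U_0=[u(t_0)\cdots u(t_{T-1})]$, $X_0=[x(t_0)\cdots x(t_{T-1})]$, $X_1=[\dot x(t_0)\cdots\dot x(t_{T-1})]$, $F_0=[f(t_0,z(t_0))\cdots f(t_{T-1},z(t_{T-1}))]$ from an experiment on the system. *)

theory Defs
  imports "HOL-Analysis.Analysis"
begin

text \<open>Matrices are HOL-Analysis Cartesian matrices: an r x c real matrix has type
  real^'c^'r; matrix product is (**), matrix-vector product is (*v).\<close>

definition pos_def_mat :: "real^'n^'n \<Rightarrow> bool" where
  "pos_def_mat M \<longleftrightarrow> (\<forall>v. v \<noteq> 0 \<longrightarrow> v \<bullet> (M *v v) > 0)"

definition sym_pos_def_mat :: "real^'n^'n \<Rightarrow> bool" where
  "sym_pos_def_mat M \<longleftrightarrow> transpose M = M \<and> pos_def_mat M"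

definition neg_def_mat :: "real^'n^'n \<Rightarrow> bool" where
  "neg_def_mat M \<longleftrightarrow> (\<forall>v. v \<noteq> 0 \<longrightarrow> v \<bullet> (M *v v) < 0)"

definition piecewise_continuous_in_t :: "(real \<Rightarrow> 'a::real_normed_vector \<Rightarrow> 'b::real_normed_vector) \<Rightarrow> bool" where
  "piecewise_continuous_in_t f \<longleftrightarrow>
     (\<forall>z a b. \<exists>S. finite S \<and>
        (\<forall>t\<in>{a..b} - S. continuous (at t) (\<lambda>s. f s z)) \<and>
        (\<forall>t\<in>S. (\<exists>l. ((\<lambda>s. f s z) \<longlongrightarrow> l) (at_left t)) \<and>
                 (\<exists>r. ((\<lambda>s. f s z) \<longlongrightarrow> r) (at_right t))))"

definition locally_lipschitz_in_z :: "(real \<Rightarrow> 'a::real_normed_vector \<Rightarrow> 'b::real_normed_vector) \<Rightarrow> bool" where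
  "locally_lipschitz_in_z f \<longleftrightarrow>
     (\<forall>t z. \<exists>\<delta>>0. \<exists>C. \<forall>s\<in>{t-\<delta>..t+\<delta>}. \<forall>z1\<in>ball z \<delta>. \<forall>z2\<in>ball z \<delta>.
         norm (f s z1 - f s z2) \<le> C * norm (z1 - z2))"

definition is_solution :: "(real \<Rightarrow> 'n::euclidean_space \<Rightarrow> 'n) \<Rightarrow> real \<Rightarrow> real \<Rightarrow> (real \<Rightarrow> 'n) \<Rightarrow> bool" where
  "is_solution F t0 t1 x \<longleftrightarrow> t0 \<le> t1 \<and> continuous_on {t0..t1} x \<and>
     (\<exists>S. finite S \<and> (\<forall>t\<in>{t0..t1} - S.
        (x has_vector_derivative F t (x t)) (at t within {t0..t1})))"

text \<open>Global uniform asymptotic stability of the origin (Khalil, Def. 4.4):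
  uniform stability, uniform boundedness and global uniform attractivity,
  required of every solution on every compact forward interval.\<close>
definition GUAS :: "(real \<Rightarrow> 'n::euclidean_space \<Rightarrow> 'n) \<Rightarrow> bool" where
  "GUAS F \<longleftrightarrow>
    (\<forall>\<epsilon>>0. \<exists>\<delta>>0. \<forall>t0 t1 x. is_solution F t0 t1 x \<and> norm (x t0) < \<delta> \<longrightarrow>
        (\<forall>t\<in>{t0..t1}. norm (x t) < \<epsilon>)) \<and>
    (\<forall>a>0. \<exists>c. \<forall>t0 t1 x. is_solution F t0 t1 x \<and> norm (x t0) < a \<longrightarrow>
        (\<forall>t\<in>{t0..t1}. norm (x t) < c)) \<and>
    (\<forall>a>0. \<forall>\<epsilon>>0. \<exists>T\<ge>0. \<forall>t0 t1 x. is_solution F t0 t1 x \<and> norm (x t0) < a \<longrightarrow>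
        (\<forall>t\<in>{t0..t1}. t \<ge> t0 + T \<longrightarrow> norm (x t) < \<epsilon>))"

end

theory Submission imports Defs begin

lemma quad_lower:
  fixes M :: "real^'n^'n"
  assumes "\<And>v. v \<noteq> 0 \<Longrightarrow> v \<bullet> (M *v v) > 0"
  shows "\<exists>a>0. \<forall>v. a * (norm v)^2 \<le> v \<bullet> (M *v v)"
proof -
  have cont: "continuous_on (sphere 0 1) (\<lambda>v. v \<bullet> (M *v v))"
    by (intro continuous_intros)
  have ne: "sphere (0::real^'n) 1 \<noteq> {}" by simp
  obtain u where u: "u \<in> sphere 0 1" and umin: "\<And>v. v \<in> sphere 0 1 \<Longrightarrow> u \<bullet> (M *v u) \<le> v \<bullet> (M *v v)"
    using continuous_attains_inf[OF compact_sphere ne cont] by blast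
  have "u \<noteq> 0" using u by auto
  then have upos: "u \<bullet> (M *v u) > 0" using assms by blast
  show ?thesis
  proof (intro exI[of _ "u \<bullet> (M *v u)"] conjI allI upos)
    fix v :: "real^'n"
    show "u \<bullet> (M *v u) * (norm v)^2 \<le> v \<bullet> (M *v v)"
    proof (cases "v = 0")
      case True then show ?thesis by simp
    next
      case False
      define w where "w = (1 / norm v) *\<^sub>R v"
      have w: "w \<in> sphere 0 1" using False by (simp add: w_def)
      have vw: "v = norm v *\<^sub>R w" using False by (simp add: w_def)
      have "v \<bullet> (M *v v) = (norm v)^2 * (w \<bullet> (M *v w))"
        by (subst (1 2) vw) (simp add: matrix_vector_mult_scaleR power2_eq_square)
      then show ?thesis using umin[OF w]
        by (metis mult.commute mult_right_mono zero_le_power2)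
    qed
  qed
qed

lemma quad_upper:
  fixes M :: "real^'n^'n"
  shows "\<exists>b>0. \<forall>v. v \<bullet> (M *v v) \<le> b * (norm v)^2"
proof -
  obtain K where K: "K > 0" "\<And>x. norm (M *v x) \<le> norm x * K"
    using bounded_linear.pos_bounded[OF matrix_vector_mul_bounded_linear[of M]] by blast
  show ?thesis
  proof (intro exI[of _ K] conjI allI K)
    fix v :: "real^'n"
    have "v \<bullet> (M *v v) \<le> norm v * norm (M *v v)" by (rule norm_cauchy_schwarz)
    also have "\<dots> \<le> norm v * (norm v * K)" by (intro mult_left_mono K) simp
    finally show "v \<bullet> (M *v v) \<le> K * (norm v)^2" by (simp add: power2_eq_square mult_ac)
  qed
qed

lemma decay:
  fixes V D :: "real \<Rightarrow> real"
  assumes "finite S" "t0 \<le> t1" "continuous_on {t0..t1} V"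
    and der: "\<And>t. t \<in> {t0..t1} - S \<Longrightarrow> (V has_vector_derivative D t) (at t within {t0..t1})"
    and le: "\<And>t. t \<in> {t0..t1} - S \<Longrightarrow> D t \<le> - c * V t"
    and t: "t \<in> {t0..t1}"
  shows "V t \<le> exp (- c * (t - t0)) * V t0"
proof -
  define W where "W s = exp (c * s) * V s" for s
  define D' where "D' s = (if s \<in> S then 0 else exp (c * s) * (c * V s + D s))" for s
  have "(D' has_integral (W t - W t0)) {t0..t}"
  proof (rule fundamental_theorem_of_calculus_interior_strong[OF assms(1)])
    show "t0 \<le> t" using t by simp
    show "continuous_on {t0..t} W" unfolding W_def
      using t by (intro continuous_intros continuous_on_subset[OF assms(3)]) auto
    fix s assume s: "s \<in> {t0<..<t} - S"
    then have s1: "s \<in> {t0<..<t1}" using t by auto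
    have "(V has_vector_derivative D s) (at s within {t0<..<t1})"
      using der[of s] s1 s by (auto intro: has_vector_derivative_within_subset)
    then have dV: "(V has_vector_derivative D s) (at s)"
      using s1 at_within_open[of s "{t0<..<t1}"] by simp
    have "(W has_vector_derivative (exp (c * s) * D s + (c * exp (c * s)) * V s)) (at s)"
    proof -
      have "((\<lambda>s. exp (c * s)) has_real_derivative (exp (c * s) * c)) (at s)"
        by (auto intro!: derivative_eq_intros)
      then have e: "((\<lambda>s. exp (c * s)) has_vector_derivative (c * exp (c * s))) (at s)"
        by (simp add: has_real_derivative_iff_has_vector_derivative mult.commute)
      show ?thesis unfolding W_def using has_vector_derivative_mult[OF e dV] by simp
    qed
    then show "(W has_vector_derivative D' s) (at s)"
      using s by (simp add: D'_def algebra_simps)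
  qed
  moreover have "\<And>s. s \<in> {t0..t} \<Longrightarrow> D' s \<le> 0"
  proof -
    fix s assume s: "s \<in> {t0..t}"
    show "D' s \<le> 0"
    proof (cases "s \<in> S")
      case False
      then have "c * V s + D s \<le> 0" using le[of s] s t by auto
      then show ?thesis unfolding D'_def using False by (simp add: mult_nonneg_nonpos)
    next
      case True
      show ?thesis unfolding D'_def using True by simp
    qed
  qed
  ultimately have "W t - W t0 \<le> 0"
    using has_integral_le[of D' "W t - W t0" "{t0..t}" "\<lambda>_. 0" 0] by (simp add: has_integral_0)
  then have "exp (c * t) * V t \<le> exp (c * t0) * V t0" by (simp add: W_def)
  then have i: "exp (- c * t) * (exp (c * t) * V t) \<le> exp (- c * t) * (exp (c * t0) * V t0)"
    by (intro mult_left_mono) auto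
  have e1: "exp (- c * t) * exp (c * t) = 1" by (simp add: exp_add[symmetric])
  have e2: "exp (- c * t) * exp (c * t0) = exp (- c * (t - t0))" by (simp add: exp_add[symmetric] algebra_simps)
  show ?thesis using i unfolding mult.assoc[symmetric] e1 e2 by simp
qed

lemma GUAS_from_bound:
  fixes F :: "real \<Rightarrow> 'n::euclidean_space \<Rightarrow> 'n"
  assumes K: "K > 0" and c: "c > 0"
    and bnd: "\<And>t0 t1 x t. is_solution F t0 t1 x \<Longrightarrow> t \<in> {t0..t1} \<Longrightarrow>
          (norm (x t))^2 \<le> K * exp (- c * (t - t0)) * (norm (x t0))^2"
  shows "GUAS F"
proof -
  have core: "norm (x t) < r"
    if sol: "is_solution F t0 t1 x" and t: "t \<in> {t0..t1}" and n0: "norm (x t0) < d"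
      and r: "r > 0" and E: "K * exp (- c * (t - t0)) * d^2 \<le> r^2" for t0 t1 x t d r
  proof -
    have "(norm (x t))^2 \<le> K * exp (- c * (t - t0)) * (norm (x t0))^2" using bnd[OF sol t] .
    also have "\<dots> < K * exp (- c * (t - t0)) * d^2"
      using K n0 by (intro mult_strict_left_mono power_strict_mono) auto
    also have "\<dots> \<le> r^2" by (rule E)
    finally show ?thesis using r by (simp add: power_less_imp_less_base)
  qed
  have ex: "exp (- c * (t - t0)) \<le> 1" if "t0 \<le> t" for t t0 :: real
    using that c by (simp add: mult_nonneg_nonneg)
  show ?thesis unfolding GUAS_def
  proof (intro conjI allI impI)
    fix \<epsilon> :: real assume e: "\<epsilon> > 0"
    define d where "d = \<epsilon> / sqrt K"
    have d: "d > 0" using e K by (simp add: d_def)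
    have dd: "K * d^2 = \<epsilon>^2" using K by (simp add: d_def power_divide)
    show "\<exists>\<delta>>0. \<forall>t0 t1 x. is_solution F t0 t1 x \<and> norm (x t0) < \<delta> \<longrightarrow> (\<forall>t\<in>{t0..t1}. norm (x t) < \<epsilon>)"
    proof (intro exI[of _ d] conjI allI impI ballI d)
      fix t0 t1 x t assume h: "is_solution F t0 t1 x \<and> norm (x t0) < d" and t: "t \<in> {t0..t1}"
      have "K * exp (- c * (t - t0)) * d^2 \<le> K * 1 * d^2"
        using K ex[of t0 t] t by (intro mult_right_mono mult_left_mono) auto
      then show "norm (x t) < \<epsilon>" using core[of t0 t1 x t d \<epsilon>] h t e dd by simp
    qed
  next
    fix a :: real assume a: "a > 0"
    define C where "C = sqrt K * a"
    have C: "C > 0" using a K by (simp add: C_def)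
    have CC: "K * a^2 = C^2" using K by (simp add: C_def power_mult_distrib)
    show "\<exists>C. \<forall>t0 t1 x. is_solution F t0 t1 x \<and> norm (x t0) < a \<longrightarrow> (\<forall>t\<in>{t0..t1}. norm (x t) < C)"
    proof (intro exI[of _ C] allI impI ballI)
      fix t0 t1 x t assume h: "is_solution F t0 t1 x \<and> norm (x t0) < a" and t: "t \<in> {t0..t1}"
      have "K * exp (- c * (t - t0)) * a^2 \<le> K * 1 * a^2"
        using K ex[of t0 t] t by (intro mult_right_mono mult_left_mono) auto
      then show "norm (x t) < C" using core[of t0 t1 x t a C] h t C CC by simp
    qed
  next
    fix a \<epsilon> :: real assume a: "a > 0" and e: "\<epsilon> > 0"
    define R where "R = K * a^2 / \<epsilon>^2"
    have R: "R > 0" using a e K by (simp add: R_def)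
    define T where "T = max 0 (ln R / c)"
    show "\<exists>T\<ge>0. \<forall>t0 t1 x. is_solution F t0 t1 x \<and> norm (x t0) < a \<longrightarrow>
        (\<forall>t\<in>{t0..t1}. t \<ge> t0 + T \<longrightarrow> norm (x t) < \<epsilon>)"
    proof (intro exI[of _ T] conjI allI impI ballI)
      show "T \<ge> 0" by (simp add: T_def)
      fix t0 t1 x t assume h: "is_solution F t0 t1 x \<and> norm (x t0) < a" and t: "t \<in> {t0..t1}"
        and tT: "t \<ge> t0 + T"
      have "ln R / c \<le> t - t0" using tT by (simp add: T_def)
      then have "ln R \<le> c * (t - t0)" using c by (simp add: divide_le_eq mult.commute)
      then have "exp (- c * (t - t0)) \<le> exp (- ln R)" by simp
      also have "\<dots> = 1 / R" using R by (simp add: exp_minus inverse_eq_divide)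
      finally have E: "exp (- c * (t - t0)) \<le> 1 / R" .
      have "K * exp (- c * (t - t0)) * a^2 \<le> K * (1 / R) * a^2"
        using K E by (intro mult_right_mono mult_left_mono) auto
      also have "\<dots> = \<epsilon>^2" using K a e by (simp add: R_def)
      finally show "norm (x t) < \<epsilon>" using core[of t0 t1 x t a \<epsilon>] h t e by simp
    qed
  qed
qed

lemma inner_mat: "(a::real^'n) \<bullet> (A *v b) = (transpose A *v a) \<bullet> (b::real^'m)"
  by (simp add: dot_lmul_matrix)

lemma neg_quad:
  fixes N :: "real^'n^'n"
  assumes "neg_def_mat N"
  shows "\<exists>a>0. \<forall>v. v \<bullet> (N *v v) \<le> - a * (norm v)^2"
proof -
  have neg: "(- N) *v v = - (N *v v)" for v
    by (simp add: matrix_vector_mult_def vec_eq_iff sum_negf)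
  obtain a where a: "a > 0" "\<forall>v. a * (norm v)^2 \<le> v \<bullet> ((- N) *v v)"
    using quad_lower[of "- N"] assms by (auto simp: neg neg_def_mat_def)
  show ?thesis
  proof (intro exI[of _ a] conjI allI a(1))
    fix v :: "real^'n"
    show "v \<bullet> (N *v v) \<le> - a * (norm v)^2" using a(2)[rule_format, of v] by (simp add: neg)
  qed
qed

lemma matrix_add_rdistrib': "((A::real^'n^'m) + B) ** C = A ** C + B ** C"
  by (vector matrix_matrix_mult_def sum.distrib[symmetric] field_simps)

theorem mainTheorem3:
  fixes A :: "real^'n^'n" and B :: "real^'m^'n"
    and L :: "real^'p^'n" and H :: "real^'n^'p"
    and U0 :: "real^'T^'m" and X0 :: "real^'T^'n" and X1 :: "real^'T^'n"
    and F0 :: "real^'T^'p" and Y :: "real^'n^'T"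
  assumes data: "X1 = A ** X0 + B ** U0 + L ** F0"
    and pd: "sym_pos_def_mat (X0 ** Y)"
    and lmi: "neg_def_mat (transpose Y ** transpose (X1 - L ** F0) + (X1 - L ** F0) ** Y)"
    and eq: "L + X0 ** Y ** transpose H = 0"
  shows "\<forall>f :: real \<Rightarrow> real^'p \<Rightarrow> real^'p.
           piecewise_continuous_in_t f \<and> locally_lipschitz_in_z f \<and>
           (\<forall>t z. z \<bullet> f t z \<ge> 0) \<longrightarrow>
           GUAS (\<lambda>t x. (A + B ** (U0 ** Y ** matrix_inv (X0 ** Y))) *v x + L *v f t (H *v x))"
proof (intro allI impI)
  fix f :: "real \<Rightarrow> real^'p \<Rightarrow> real^'p"
  assume "piecewise_continuous_in_t f \<and> locally_lipschitz_in_z f \<and> (\<forall>t z. z \<bullet> f t z \<ge> 0)"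
  then have pass: "\<And>t z. z \<bullet> f t z \<ge> 0" by blast
  define P where "P = X0 ** Y"
  define Q where "Q = matrix_inv P"
  define M where "M = (X1 - L ** F0) ** Y"
  define Acl where "Acl = A + B ** (U0 ** Y ** Q)"
  have Psym: "transpose P = P" and Ppd: "\<And>v. v \<noteq> 0 \<Longrightarrow> v \<bullet> (P *v v) > 0"
    using pd unfolding sym_pos_def_mat_def pos_def_mat_def P_def by auto
  have "\<forall>x. P *v x = 0 \<longrightarrow> x = 0" using Ppd by (metis inner_zero_right less_irrefl)
  then have "invertible P" using matrix_left_invertible_ker invertible_left_inverse by blast
  then have PQ: "P ** Q = mat 1" and QP: "Q ** P = mat 1"
    unfolding Q_def matrix_inv_def invertible_def by (metis (mono_tags, lifting) someI_ex)+
  have Qsym: "transpose Q = Q"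
  proof -
    have "transpose Q ** P = mat 1" using PQ Psym by (metis matrix_transpose_mul transpose_mat)
    then show ?thesis using PQ by (metis matrix_mul_assoc matrix_mul_lid matrix_mul_rid)
  qed
  have AclP: "Acl ** P = M"
  proof -
    have "B ** (U0 ** Y ** Q) ** P = B ** U0 ** Y ** (Q ** P)" by (simp add: matrix_mul_assoc)
    also have "\<dots> = B ** U0 ** Y" by (simp add: QP)
    finally have 1: "B ** (U0 ** Y ** Q) ** P = B ** U0 ** Y" .
    have 2: "X1 - L ** F0 = A ** X0 + B ** U0" using data by simp
    show ?thesis unfolding Acl_def M_def matrix_add_rdistrib' 1 2
      by (simp add: P_def matrix_mul_assoc)
  qed
  define N where "N = transpose M + M"
  have Ndef: "transpose Y ** transpose (X1 - L ** F0) + (X1 - L ** F0) ** Y = N"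
    unfolding N_def M_def by (simp add: matrix_transpose_mul)
  obtain \<alpha> where al: "\<alpha> > 0" "\<And>v. v \<bullet> (N *v v) \<le> - \<alpha> * (norm v)^2"
    using neg_quad[OF lmi[unfolded Ndef]] by blast
  obtain \<beta> where be: "\<beta> > 0" "\<And>v. v \<bullet> (P *v v) \<le> \<beta> * (norm v)^2"
    using quad_upper[of P] by blast
  have Leq: "L = - (P ** transpose H)" using eq unfolding P_def by (simp add: eq_neg_iff_add_eq_0)
  have negmv: "(- C) *v v = - (C *v v)" for C :: "real^'p^'n" and v
    by (simp add: matrix_vector_mult_def vec_eq_iff sum_negf)
  have PQx: "P *v (Q *v x) = x" for x using PQ by (simp add: matrix_vector_mul_assoc)
  have QPx: "Q *v (P *v x) = x" for x using QP by (simp add: matrix_vector_mul_assoc)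
  have key: "2 * ((Q *v x) \<bullet> (Acl *v x + L *v y)) \<le> (Q *v x) \<bullet> (N *v (Q *v x))"
    if hy: "(H *v x) \<bullet> y \<ge> 0" for x y
  proof -
    define w where "w = Q *v x"
    have xw: "x = P *v w" using PQx by (simp add: w_def)
    have 1: "Acl *v x = M *v w" unfolding xw matrix_vector_mul_assoc AclP ..
    have "w \<bullet> (L *v y) = - (w \<bullet> (P *v (transpose H *v y)))"
      unfolding Leq negmv by (simp only: matrix_vector_mul_assoc[symmetric] inner_minus_right)
    also have "w \<bullet> (P *v (transpose H *v y)) = (H *v x) \<bullet> y"
      unfolding inner_mat Psym xw[symmetric] by (simp add: inner_mat[of x])
    finally have 2: "w \<bullet> (L *v y) \<le> 0" using hy by simp
    have tt: "w \<bullet> (transpose M *v w) = w \<bullet> (M *v w)"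
      by (metis inner_mat transpose_transpose inner_commute)
    have 3: "w \<bullet> (N *v w) = 2 * (w \<bullet> (M *v w))"
      unfolding N_def matrix_vector_mult_add_rdistrib inner_add_right
      by (simp only: tt)
    show ?thesis unfolding w_def[symmetric] inner_add_right 1 3 using 2 by simp
  qed
  have Qpos: "x \<bullet> (Q *v x) > 0" if "x \<noteq> 0" for x
  proof -
    have "Q *v x \<noteq> 0" using that PQx[of x] by force
    then have "(Q *v x) \<bullet> (P *v (Q *v x)) > 0" by (rule Ppd)
    then show ?thesis unfolding PQx by (simp add: inner_commute)
  qed
  obtain a0 where a0: "a0 > 0" "\<And>v. a0 * (norm v)^2 \<le> v \<bullet> (Q *v v)"
    using quad_lower[of Q] Qpos by blast
  obtain b0 where b0: "b0 > 0" "\<And>v. v \<bullet> (Q *v v) \<le> b0 * (norm v)^2"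
    using quad_upper[of Q] by blast
  define c where "c = \<alpha> / \<beta>"
  have c: "c > 0" using al be by (simp add: c_def)
  have dV: "2 * ((Q *v x) \<bullet> (Acl *v x + L *v y)) \<le> - c * (x \<bullet> (Q *v x))"
    if hy: "(H *v x) \<bullet> y \<ge> 0" for x y
  proof -
    define w where "w = Q *v x"
    have V: "x \<bullet> (Q *v x) = w \<bullet> (P *v w)" unfolding w_def PQx by (simp add: inner_commute)
    have "w \<bullet> (P *v w) \<le> \<beta> * (norm w)^2" by (rule be(2))
    then have "c * (w \<bullet> (P *v w)) \<le> \<alpha> * (norm w)^2"
      using al be unfolding c_def by (simp add: field_simps)
    moreover have "- c * (x \<bullet> (Q *v x)) = - (c * (w \<bullet> (P *v w)))" using V by simp
    moreover have "- \<alpha> * (norm w)^2 = - (\<alpha> * (norm w)^2)" by simp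
    ultimately show ?thesis using key[OF hy] al(2)[of w] unfolding w_def[symmetric] by linarith
  qed
  let ?F = "\<lambda>t x. Acl *v x + L *v f t (H *v x)"
  have "GUAS ?F"
  proof (rule GUAS_from_bound[of "b0 / a0" c])
    show "b0 / a0 > 0" using a0 b0 by simp
    show "c > 0" by (rule c)
    fix t0 t1 x t assume sol: "is_solution ?F t0 t1 x" and t: "t \<in> {t0..t1}"
    obtain S where S: "finite S" and t01: "t0 \<le> t1" and cx: "continuous_on {t0..t1} x"
      and der: "\<And>s. s \<in> {t0..t1} - S \<Longrightarrow> (x has_vector_derivative ?F s (x s)) (at s within {t0..t1})"
      using sol unfolding is_solution_def by blast
    define V where "V s = x s \<bullet> (Q *v x s)" for s
    define D where "D s = 2 * ((Q *v x s) \<bullet> ?F s (x s))" for s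
    have "V t \<le> exp (- c * (t - t0)) * V t0"
    proof (rule decay[OF S t01 _ _ _ t])
      show "continuous_on {t0..t1} V" unfolding V_def
        by (intro continuous_intros cx continuous_on_compose[OF cx matrix_vector_mult_linear_continuous_on, unfolded o_def])
      fix s assume s: "s \<in> {t0..t1} - S"
      have dQ: "((\<lambda>s. Q *v x s) has_vector_derivative Q *v ?F s (x s)) (at s within {t0..t1})"
        by (rule bounded_linear.has_vector_derivative[OF matrix_vector_mul_bounded_linear der[OF s]])
      have "(V has_vector_derivative (x s \<bullet> (Q *v ?F s (x s)) + ?F s (x s) \<bullet> (Q *v x s))) (at s within {t0..t1})"
        unfolding V_def by (rule bounded_bilinear.has_vector_derivative[OF bounded_bilinear_inner der[OF s] dQ])
      moreover have "x s \<bullet> (Q *v ?F s (x s)) = (Q *v x s) \<bullet> ?F s (x s)"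
        by (metis inner_mat Qsym)
      ultimately show "(V has_vector_derivative D s) (at s within {t0..t1})"
        by (simp add: D_def inner_commute)
      show "D s \<le> - c * V s" unfolding D_def V_def by (rule dV) (rule pass)
    qed
    then have "a0 * (norm (x t))^2 \<le> exp (- c * (t - t0)) * (b0 * (norm (x t0))^2)"
      using a0(2)[of "x t"] b0(2)[of "x t0"] unfolding V_def
      by (meson exp_ge_zero mult_left_mono order_trans)
    then show "(norm (x t))^2 \<le> b0 / a0 * exp (- c * (t - t0)) * (norm (x t0))^2"
      using a0(1) by (simp add: field_simps)
  qed
  then show "GUAS (\<lambda>t x. (A + B ** (U0 ** Y ** matrix_inv (X0 ** Y))) *v x + L *v f t (H *v x))"
    unfolding Acl_def Q_def P_def .
qed
end
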